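(* Let $k\ge 1$ and let $L_i(m)=a_im+b_i$ ($i=1,\dots,k$) be an admissible $k$-tuple of linear forms. Suppose that for certain pairs $i\neq j$ there are relations $|c_{i,j}L_i-c_{j,i}L_j|=n_{i,j}$ with positive integers $c_{i,j},c_{j,i},n_{i,j}$. Let $r_1,\dots,r_k$ be positive integers such that $\gcd(r_i,a_i)=1$ for all $i$, and $\gcd(r_i,\det(L_i,L_j))=\gcd(r_i,r_j)=1$ whenever $i\neq j$. Then there is an admissible $k$-tuple of linear forms $K_1,\dots,K_k$ satisfying, for each of those pairs, the relations $|c_{i,j}r_iK_i-c_{j,i}r_jK_j|=n_{i,j}$.
   Context: A linear form is a polynomial $L(m)=am+b$ with $a,b\in\mathbb{Z}$ and $a>0$ (viewed both as a polynomial and as a function of $m$). For linear forms $L(m)=am+b$ and $K(m)=cm+d$, a relation between them is an identity of polynomials $|c_L L-c_K K|=n$ (i.e. $c_LL-c_KK$ is the constant polynomial $\pm n$) with $c_L,c_K,n$ positive integers; $c_L,c_K$ are the relation coefficients and $n$ the relation value. The determinant is $\det(L,K)=|ad-bc|$. For a prime $p$, a $k$-tuple $L_1,\dots,L_k$ is $p$-admissible if there is an integer $t_p$ with $L_1(t_p)\cdots L_k(t_p)\not\equiv 0 \pmod p$; it is admissible if it is $p$-admissible for every prime $p$. *)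

theory Defs
  imports "HOL-Computational_Algebra.Polynomial" "HOL-Computational_Algebra.Primes"
begin

text \<open>The linear form a m + b, as an integer polynomial (it is a linear form iff a > 0).\<close>
definition linform :: "int \<Rightarrow> int \<Rightarrow> int poly" where
  "linform a b = [:b, a:]"

definition relation :: "int \<Rightarrow> int poly \<Rightarrow> int \<Rightarrow> int poly \<Rightarrow> int \<Rightarrow> bool" where
  "relation cL L cK K n \<longleftrightarrow> cL > 0 \<and> cK > 0 \<and> n > 0 \<and>
     (smult cL L - smult cK K = [:n:] \<or> smult cL L - smult cK K = [:-n:])"

definition det_lf :: "int \<Rightarrow> int \<Rightarrow> int \<Rightarrow> int \<Rightarrow> int" where
  "det_lf a b c d = \<bar>a * d - b * c\<bar>"

definition p_admissible :: "int \<Rightarrow> nat \<Rightarrow> (nat \<Rightarrow> int) \<Rightarrow> (nat \<Rightarrow> int) \<Rightarrow> bool" where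
  "p_admissible p k a b \<longleftrightarrow>
     (\<exists>t::int. \<not> p dvd (\<Prod>i\<in>{1..k}. poly (linform (a i) (b i)) t))"

definition admissible :: "nat \<Rightarrow> (nat \<Rightarrow> int) \<Rightarrow> (nat \<Rightarrow> int) \<Rightarrow> bool" where
  "admissible k a b \<longleftrightarrow> (\<forall>p::int. prime p \<longrightarrow> p_admissible p k a b)"

end

theory Submission
  imports Defs "HOL-Number_Theory.Cong"
begin

lemma crt_lin:
  fixes r a b :: "nat \<Rightarrow> int"
  assumes "finite S" "\<forall>i\<in>S. coprime (a i) (r i)"
    "\<forall>i\<in>S. \<forall>j\<in>S. i \<noteq> j \<longrightarrow> coprime (r i) (r j)"
  shows "\<exists>t. \<forall>i\<in>S. r i dvd a i * t + b i"
  using assms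
proof (induction S rule: finite_induct)
  case empty
  then show ?case by simp
next
  case (insert j S)
  then obtain t where t: "\<forall>i\<in>S. r i dvd a i * t + b i" by auto
  define M where "M = (\<Prod>i\<in>S. r i)"
  have "coprime M (r j)" unfolding M_def
    by (rule prod_coprime_left) (use insert in auto)
  then have "coprime (a j * M) (r j)" using insert by auto
  then obtain u v where uv: "u * (a j * M) + v * r j = 1"
    using bezout_int[of "a j * M" "r j"] by (auto simp: coprime_iff_gcd_eq_1)
  define t' where "t' = t - M * u * (a j * t + b j)"
  have "a j * t' + b j = (a j * t + b j) * (1 - u * (a j * M))"
    unfolding t'_def by (simp add: algebra_simps)
  also have "1 - u * (a j * M) = v * r j" using uv by linarith
  then have "(a j * t + b j) * (1 - u * (a j * M)) = (a j * t + b j) * v * r j" by simp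
  finally have j: "r j dvd a j * t' + b j" by simp
  have "r i dvd a i * t' + b i" if "i \<in> S" for i
  proof -
    have "r i dvd M" unfolding M_def using that insert by (simp add: dvd_prodI)
    then have "r i dvd a i * (M * u * (a j * t + b j))" by simp
    moreover have "a i * t' + b i = (a i * t + b i) - a i * (M * u * (a j * t + b j))"
      unfolding t'_def by (simp add: algebra_simps)
    ultimately show ?thesis using t that by (metis dvd_diff)
  qed
  then show ?case using j by auto
qed

lemma poly_lf: "poly (linform x y) m = x * m + y"
  by (simp add: linform_def)

theorem theorem2p2:
  fixes k :: nat and a b r :: "nat \<Rightarrow> int" and c n :: "nat \<Rightarrow> nat \<Rightarrow> int"
    and P :: "(nat \<times> nat) set"
  assumes "k \<ge> 1"
    and "\<forall>i\<in>{1..k}. a i > 0"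
    and "admissible k a b"
    and "P \<subseteq> {(i, j). i \<in> {1..k} \<and> j \<in> {1..k} \<and> i \<noteq> j}"
    and "\<forall>(i, j)\<in>P. relation (c i j) (linform (a i) (b i)) (c j i) (linform (a j) (b j)) (n i j)"
    and "\<forall>i\<in>{1..k}. r i > 0"
    and "\<forall>i\<in>{1..k}. gcd (r i) (a i) = 1"
    and "\<forall>i\<in>{1..k}. \<forall>j\<in>{1..k}. i \<noteq> j \<longrightarrow>
           gcd (r i) (det_lf (a i) (b i) (a j) (b j)) = 1 \<and> gcd (r i) (r j) = 1"
  shows "\<exists>a' b' :: nat \<Rightarrow> int. (\<forall>i\<in>{1..k}. a' i > 0) \<and> admissible k a' b' \<and>
           (\<forall>(i, j)\<in>P. relation (c i j * r i) (linform (a' i) (b' i))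
                                 (c j i * r j) (linform (a' j) (b' j)) (n i j))"
proof -
  have cop: "\<forall>i\<in>{1..k}. \<forall>j\<in>{1..k}. i \<noteq> j \<longrightarrow> coprime (r i) (r j)"
    using assms(8) by (simp add: coprime_iff_gcd_eq_1)
  have copa: "\<forall>i\<in>{1..k}. coprime (a i) (r i)"
    using assms(7) by (simp add: coprime_iff_gcd_eq_1 gcd.commute)
  obtain t where t: "\<forall>i\<in>{1..k}. r i dvd a i * t + b i"
    using crt_lin[of "{1..k}" a r b] copa cop by auto
  define Rr where "Rr i = (\<Prod>j\<in>{1..k}-{i}. r j)" for i
  define R where "R = (\<Prod>j\<in>{1..k}. r j)"
  define a' where "a' i = a i * Rr i" for i
  define b' where "b' i = (a i * t + b i) div r i" for i
  have rb: "r i * b' i = a i * t + b i" if "i \<in> {1..k}" for i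
    using t that unfolding b'_def by simp
  have RR: "R = r i * Rr i" if "i \<in> {1..k}" for i
    unfolding R_def Rr_def using that by (simp add: prod.remove)
  have Rrpos: "Rr i > 0" for i
    unfolding Rr_def using assms(6) by (intro prod_pos) auto
  have ra: "r i * a' i = a i * R" if "i \<in> {1..k}" for i
    using RR[OF that] unfolding a'_def by simp
  have rK: "r i * (a' i * m + b' i) = a i * (R * m + t) + b i" if "i \<in> {1..k}" for i m
    using ra[OF that] rb[OF that] by (simp add: algebra_simps)
  have pos: "\<forall>i\<in>{1..k}. a' i > 0"
    using assms(2) Rrpos unfolding a'_def by simp
  have rel: "\<forall>(i, j)\<in>P. relation (c i j * r i) (linform (a' i) (b' i))
                                 (c j i * r j) (linform (a' j) (b' j)) (n i j)"
  proof (intro ballI, clarify)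
    fix i j assume ij: "(i, j) \<in> P"
    then have i: "i \<in> {1..k}" and j: "j \<in> {1..k}" using assms(4) by auto
    have h: "relation (c i j) (linform (a i) (b i)) (c j i) (linform (a j) (b j)) (n i j)"
      using assms(5) ij by auto
    then have pos3: "c i j > 0" "c j i > 0" "n i j > 0" unfolding relation_def by auto
    from h have ea: "c i j * a i = c j i * a j"
      and eb: "c i j * b i - c j i * b j = n i j \<or> c i j * b i - c j i * b j = - n i j"
      unfolding relation_def linform_def by auto
    have "c i j * r i * a' i = c i j * a i * R" using ra[OF i] by (simp add: mult.assoc)
    also have "\<dots> = c j i * a j * R" using ea by simp
    also have "\<dots> = c j i * r j * a' j" using ra[OF j] by (simp add: mult.assoc)
    finally have e1: "c i j * r i * a' i - c j i * r j * a' j = 0" by simp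
    have "c i j * r i * b' i - c j i * r j * b' j
        = t * (c i j * a i - c j i * a j) + (c i j * b i - c j i * b j)"
    proof -
      have x: "c i j * r i * b' i = c i j * (a i * t + b i)" using rb[OF i] by (simp add: mult.assoc)
      have y: "c j i * r j * b' j = c j i * (a j * t + b j)" using rb[OF j] by (simp add: mult.assoc)
      show ?thesis unfolding x y by (simp add: algebra_simps)
    qed
    then have e2: "c i j * r i * b' i - c j i * r j * b' j = c i j * b i - c j i * b j"
      using ea by simp
    show "relation (c i j * r i) (linform (a' i) (b' i)) (c j i * r j) (linform (a' j) (b' j)) (n i j)"
      unfolding relation_def linform_def using pos3 assms(6) i j e1 e2 eb by auto
  qed
  have adm: "admissible k a' b'"
    unfolding admissible_def p_admissible_def
  proof (intro allI impI)
    fix p :: int assume p: "prime p"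
    show "\<exists>m. \<not> p dvd (\<Prod>i\<in>{1..k}. poly (linform (a' i) (b' i)) m)"
    proof (cases "p dvd R")
      case False
      from assms(3) p obtain tp where tp0: "\<not> p dvd (\<Prod>i\<in>{1..k}. poly (linform (a i) (b i)) tp)"
        unfolding admissible_def p_admissible_def by auto
      then have tp: "\<not> p dvd (\<Prod>i\<in>{1..k}. a i * tp + b i)"
        by (simp add: poly_lf)
      have "coprime p R" using p False by (rule prime_imp_coprime)
      then obtain u v where uv: "u * R + v * p = 1"
        using bezout_int[of R p] by (auto simp: coprime_iff_gcd_eq_1 gcd.commute)
      define m where "m = u * (tp - t)"
      have uR: "u * R = 1 - v * p" using uv by linarith
      have "R * m = (u * R) * (tp - t)" unfolding m_def by (simp add: ac_simps)
      also have "\<dots> = (tp - t) - p * (v * (tp - t))" unfolding uR by (simp add: algebra_simps)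
      finally have "(R * m + t) - tp = p * (- (v * (tp - t)))" by simp
      then have cm: "[R * m + t = tp] (mod p)"
        by (simp add: cong_iff_dvd_diff)
      have c1: "[(\<Prod>i\<in>{1..k}. a i * (R * m + t) + b i) = (\<Prod>i\<in>{1..k}. a i * tp + b i)] (mod p)"
        by (intro cong_prod cong_add cong_mult cong_refl cm)
      have e: "(\<Prod>i\<in>{1..k}. a i * (R * m + t) + b i)
          = R * (\<Prod>i\<in>{1..k}. a' i * m + b' i)"
      proof -
        have "R * (\<Prod>i\<in>{1..k}. a' i * m + b' i) = (\<Prod>i\<in>{1..k}. r i * (a' i * m + b' i))"
          unfolding R_def by (simp add: prod.distrib)
        also have "\<dots> = (\<Prod>i\<in>{1..k}. a i * (R * m + t) + b i)"
          by (rule prod.cong) (use rK in auto)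
        finally show ?thesis by simp
      qed
      have "\<not> p dvd (\<Prod>i\<in>{1..k}. a' i * m + b' i)"
      proof
        assume d: "p dvd (\<Prod>i\<in>{1..k}. a' i * m + b' i)"
        have "p dvd (\<Prod>i\<in>{1..k}. a i * (R * m + t) + b i)" unfolding e using d by simp
        then have "p dvd (\<Prod>i\<in>{1..k}. a i * tp + b i)" using cong_dvd_iff[OF c1] by simp
        then show False using tp by simp
      qed
      then show ?thesis by (auto simp: poly_lf)
    next
      case True
      then obtain i0 where i0: "i0 \<in> {1..k}" "p dvd r i0"
        using p unfolding R_def by (auto simp: prime_dvd_prod_iff)
      have nu: "\<not> p dvd 1" using p by (meson not_prime_unit)
      have ndr: "\<not> p dvd r j" if "j \<in> {1..k}" "j \<noteq> i0" for j
      proof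
        assume "p dvd r j"
        then have "p dvd gcd (r i0) (r j)" using i0 by (intro gcd_greatest)
        moreover have "gcd (r i0) (r j) = 1" using assms(8) i0 that by auto
        ultimately show False using nu by simp
      qed
      have nRr: "\<not> p dvd Rr i0"
        unfolding Rr_def using p ndr by (auto simp: prime_dvd_prod_iff)
      have na: "\<not> p dvd a i0"
      proof
        assume "p dvd a i0"
        then have "p dvd gcd (r i0) (a i0)" using i0 by (intro gcd_greatest)
        moreover have "gcd (r i0) (a i0) = 1" using assms(7) i0 by auto
        ultimately show False using nu by simp
      qed
      have na': "\<not> p dvd a' i0" unfolding a'_def using p na nRr by (simp add: prime_dvd_mult_iff)
      have nj: "\<not> p dvd a' j * m + b' j" if "j \<in> {1..k}" "j \<noteq> i0" for j m
      proof
        assume H: "p dvd a' j * m + b' j"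
        have "p dvd Rr j" unfolding Rr_def using i0 that by (intro dvd_trans[OF i0(2)] dvd_prodI) auto
        then have "p dvd a' j * m" unfolding a'_def by simp
        then have pb: "p dvd b' j" using H dvd_add_right_iff by blast
        have "p dvd a j * t + b j" unfolding rb[OF that(1), symmetric] using pb by simp
        moreover have "p dvd a i0 * t + b i0" unfolding rb[OF i0(1), symmetric] using i0(2) by simp
        ultimately have "p dvd a i0 * (a j * t + b j) - a j * (a i0 * t + b i0)" by simp
        moreover have "a i0 * (a j * t + b j) - a j * (a i0 * t + b i0) = a i0 * b j - b i0 * a j"
          by (simp add: algebra_simps)
        ultimately have "p dvd det_lf (a i0) (b i0) (a j) (b j)" unfolding det_lf_def by simp
        then have "p dvd gcd (r i0) (det_lf (a i0) (b i0) (a j) (b j))" using i0 by (intro gcd_greatest)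
        moreover have "gcd (r i0) (det_lf (a i0) (b i0) (a j) (b j)) = 1" using assms(8) i0 that by auto
        ultimately show False using nu by simp
      qed
      obtain m where m: "\<not> p dvd a' i0 * m + b' i0"
      proof (cases "p dvd b' i0")
        case True
        then have "\<not> p dvd a' i0 * 1 + b' i0" using na' by (simp add: dvd_add_left_iff)
        then show ?thesis using that by blast
      next
        case False
        then have "\<not> p dvd a' i0 * 0 + b' i0" by simp
        then show ?thesis using that by blast
      qed
      have "(\<Prod>i\<in>{1..k}. a' i * m + b' i) = (a' i0 * m + b' i0) * (\<Prod>i\<in>{1..k}-{i0}. a' i * m + b' i)"
        using i0 by (simp add: prod.remove)
      moreover have "\<not> p dvd (\<Prod>i\<in>{1..k}-{i0}. a' i * m + b' i)"
        using p nj by (auto simp: prime_dvd_prod_iff)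
      ultimately have "\<not> p dvd (\<Prod>i\<in>{1..k}. a' i * m + b' i)"
        using m p by (simp add: prime_dvd_mult_iff)
      then show ?thesis by (auto simp: poly_lf)
    qed
  qed
  show ?thesis using pos adm rel by blast
qed

end
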